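(* Assume $S$ is symmetric. Then for every integer $k\ge0$, $F_k=F_k^+F_k^-$. Moreover, let $k\ge1$ with $F_{k+1}\neq0$ (so that $1-A_k$ is invertible and $F^\pm_{k+1}\ne0$) and put $E_{k,\ell}:=[(1-A_k)^{-1}]_{0,\ell}$ for $0\le\ell\le k$. Then for every $\ell$ with $0\le\ell<k/2$, $$E_{k,\ell}+E_{k,k-\ell}=\frac{F^+_{k,\ell}}{F^+_{k+1}},\qquad E_{k,\ell}-E_{k,k-\ell}=\frac{F^-_{k,\ell}}{F^-_{k+1}},$$ and if $k$ is even, $E_{k,k/2}=F^+_{k,k/2}/F^+_{k+1}$.
   Context: Let $S$ be a finite set of integers with $a:=\max S\ge1$; $S$ is called symmetric if $-S=S$ and $\omega_{-s}=\omega_s$ for all $s\in S$, where each $s\in S$ carries a weight $\omega_s$ in a field $K$ of characteristic $0$; set $\omega_s:=0$ for $s\notin S$. For $k\ge0$, $A_k$ is the $(k+1)\times(k+1)$ matrix with rows and columns indexed by $0,\dots,k$ whose $(i,j)$ entry is $\omega_{j-i}$; $F_0:=1$ and $F_k:=\det(1-A_{k-1})$ for $k\ge1$. (For formal weights, $E_{k,\ell}$ is the weighted generating function of paths with steps in $S$ from $0$ to $\ell$ staying within $[0,k]$.) For $k\ge0$, $A_k^+$ is the matrix with rows and columns indexed by the integers $0\le i,j\le k/2$ and entries $\omega_{j-i}+\omega_{k-j-i}$ if $j<k/2$ and $\omega_{j-i}$ if $j=k/2$; $A_k^-$ is the matrix with rows and columns indexed by the integers $0\le i,j<k/2$ and entries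 $\omega_{j-i}-\omega_{k-j-i}$. The determinant of an empty matrix is $1$. Put $F^\pm_0:=1$ and $F^\pm_k:=\det(1-A^\pm_{k-1})$ for $k\ge1$. For an index $\ell$ of $A^\pm_k$, $F^\pm_{k,\ell}$ is the $(\ell,0)$ cofactor of $1-A_k^\pm$, i.e. $(-1)^\ell$ times the determinant of $1-A_k^\pm$ with row $\ell$ and column $0$ deleted. *)

theory Defs
  imports "Jordan_Normal_Form.Determinant"
begin

text \<open>Weights are a function w :: int => 'a (w s = 0 for s outside S).
  Matrices are Jordan_Normal_Form matrices, rows/columns indexed from 0.\<close>

definition A_mat :: "(int \<Rightarrow> 'a::comm_ring_1) \<Rightarrow> nat \<Rightarrow> 'a mat" where
  "A_mat w k = mat (k+1) (k+1) (\<lambda>(i,j). w (int j - int i))"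

definition F :: "(int \<Rightarrow> 'a::comm_ring_1) \<Rightarrow> nat \<Rightarrow> 'a" where
  "F w k = (if k = 0 then 1 else det (1\<^sub>m k - A_mat w (k - 1)))"

text \<open>A_k^+ : indices 0 <= i,j <= k/2, i.e. i,j < k div 2 + 1.\<close>
definition Aplus_mat :: "(int \<Rightarrow> 'a::comm_ring_1) \<Rightarrow> nat \<Rightarrow> 'a mat" where
  "Aplus_mat w k = mat (k div 2 + 1) (k div 2 + 1)
     (\<lambda>(i,j). if 2 * j < k then w (int j - int i) + w (int k - int j - int i)
              else w (int j - int i))"

text \<open>A_k^- : indices 0 <= i,j < k/2, i.e. i,j < (k+1) div 2.\<close>
definition Aminus_mat :: "(int \<Rightarrow> 'a::comm_ring_1) \<Rightarrow> nat \<Rightarrow> 'a mat" where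
  "Aminus_mat w k = mat ((k+1) div 2) ((k+1) div 2)
     (\<lambda>(i,j). w (int j - int i) - w (int k - int j - int i))"

definition Fplus :: "(int \<Rightarrow> 'a::comm_ring_1) \<Rightarrow> nat \<Rightarrow> 'a" where
  "Fplus w k = (if k = 0 then 1 else det (1\<^sub>m (dim_row (Aplus_mat w (k - 1))) - Aplus_mat w (k - 1)))"

definition Fminus :: "(int \<Rightarrow> 'a::comm_ring_1) \<Rightarrow> nat \<Rightarrow> 'a" where
  "Fminus w k = (if k = 0 then 1 else det (1\<^sub>m (dim_row (Aminus_mat w (k - 1))) - Aminus_mat w (k - 1)))"

definition Fplus_cof :: "(int \<Rightarrow> 'a::comm_ring_1) \<Rightarrow> nat \<Rightarrow> nat \<Rightarrow> 'a" where
  "Fplus_cof w k l = cofactor (1\<^sub>m (dim_row (Aplus_mat w k)) - Aplus_mat w k) l 0"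

definition Fminus_cof :: "(int \<Rightarrow> 'a::comm_ring_1) \<Rightarrow> nat \<Rightarrow> nat \<Rightarrow> 'a" where
  "Fminus_cof w k l = cofactor (1\<^sub>m (dim_row (Aminus_mat w k)) - Aminus_mat w k) l 0"

definition inv_mat :: "'a::comm_ring_1 mat \<Rightarrow> 'a mat" where
  "inv_mat M = (THE B. B \<in> carrier_mat (dim_row M) (dim_row M) \<and>
                       M * B = 1\<^sub>m (dim_row M) \<and> B * M = 1\<^sub>m (dim_row M))"

definition E :: "(int \<Rightarrow> 'a::comm_ring_1) \<Rightarrow> nat \<Rightarrow> nat \<Rightarrow> 'a" where
  "E w k l = inv_mat (1\<^sub>m (k+1) - A_mat w k) $$ (0, l)"

end

theory Submission
  imports Defs
begin


lemma mult_col2: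
  fixes X Y :: "'a::comm_ring_1 mat"
  assumes "dim_col X = n" "dim_row Y = n" "i < dim_row X" "j < dim_col Y" "a < n" "b < n"
    "\<And>l. l < n \<Longrightarrow> Y $$ (l,j) = (if l = a then 1 else 0) + (if l = b then c else 0)"
  shows "(X * Y) $$ (i,j) = X $$ (i,a) + c * X $$ (i,b)"
proof -
  have "(X * Y) $$ (i,j) = (\<Sum>l\<in>{0..<n}. X $$ (i,l) * ((if l = a then 1 else 0) + (if l = b then c else 0)))"
    using assms by (auto simp: scalar_prod_def intro!: sum.cong)
  also have "\<dots> = (\<Sum>l\<in>{0..<n}. (if l = a then X $$ (i,l) else 0)) + (\<Sum>l\<in>{0..<n}. (if l = b then c * X $$ (i,l) else 0))"
    by (subst sum.distrib[symmetric], rule sum.cong, auto simp: distrib_left mult.commute)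
  also have "\<dots> = X $$ (i,a) + c * X $$ (i,b)" using assms by simp
  finally show ?thesis .
qed

lemma mult_row2:
  fixes X Y :: "'a::comm_ring_1 mat"
  assumes "dim_col Y = n" "dim_row X = n" "i < dim_row Y" "j < dim_col X" "a < n" "b < n \<or> c = 0"
    "\<And>l. l < n \<Longrightarrow> Y $$ (i,l) = (if l = a then 1 else 0) + (if l = b then c else 0)"
  shows "(Y * X) $$ (i,j) = X $$ (a,j) + c * X $$ (b,j)"
proof -
  have "(Y * X) $$ (i,j) = (\<Sum>l\<in>{0..<n}. ((if l = a then 1 else 0) + (if l = b then c else 0)) * X $$ (l,j))"
    using assms by (auto simp: scalar_prod_def intro!: sum.cong)
  also have "\<dots> = (\<Sum>l\<in>{0..<n}. (if l = a then X $$ (l,j) else 0)) + (\<Sum>l\<in>{0..<n}. (if l = b then c * X $$ (l,j) else 0))"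
    by (subst sum.distrib[symmetric], rule sum.cong, auto simp: distrib_right)
  also have "\<dots> = X $$ (a,j) + c * X $$ (b,j)" using assms by auto
  finally show ?thesis .
qed

definition va :: "nat \<Rightarrow> nat \<Rightarrow> nat" where
  "va N j = (if j < N div 2 + 1 then j else j - (N div 2 + 1))"
definition vb :: "nat \<Rightarrow> nat \<Rightarrow> nat" where
  "vb N j = (if j < N div 2 + 1 then N - j else N - (j - (N div 2 + 1)))"
definition vc :: "nat \<Rightarrow> nat \<Rightarrow> 'a::comm_ring_1" where
  "vc N j = (if j < N div 2 + 1 then (if N - j = j then 0 else 1) else -1)"
definition Vm :: "nat \<Rightarrow> 'a::comm_ring_1 mat" where
  "Vm N = mat (N+1) (N+1) (\<lambda>(i,j). (if i = va N j then 1 else 0) + (if i = vb N j then vc N j else 0))"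
definition Wm :: "nat \<Rightarrow> 'a::field mat" where
  "Wm N = mat (N+1) (N+1) (\<lambda>(r,l). (if l = va N r then 1/2 else 0) +
       (if l = vb N r then (if r < N div 2 + 1 then 1/2 else -1/2) else 0))"

lemma WV: "Wm N * (Vm N :: 'a::field_char_0 mat) = 1\<^sub>m (N+1)"
proof (rule eq_matI)
  fix r j assume r: "r < dim_row (1\<^sub>m (N+1) :: 'a mat)" and j: "j < dim_col (1\<^sub>m (N+1) :: 'a mat)"
  have "(Wm N * (Vm N :: 'a mat)) $$ (r,j) = Wm N $$ (r, va N j) + vc N j * Wm N $$ (r, vb N j)"
    by (rule mult_col2[where n="N+1"], insert r j, auto simp: Wm_def Vm_def va_def vb_def)
  also have "\<dots> = 1\<^sub>m (N+1) $$ (r,j)"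
  proof -
    have rN: "r < N+1" "j < N+1" using r j by auto
    define p where "p = N div 2 + 1"
    have p: "N < 2*p" "2*p \<le> N+2" "N div 2 + 1 = p" unfolding p_def by auto
    show ?thesis
    proof (cases "j < p")
      case jp: True
      show ?thesis
      proof (cases "r < p")
        case rp: True
        show ?thesis
        proof (cases "r = j")
          case True
          then show ?thesis using rN jp rp p by (simp add: Wm_def va_def vb_def vc_def)
        next
          case False
          have "j \<noteq> N - r" "N - j \<noteq> r" using False jp rp p rN by linarith+
          then show ?thesis using False rN jp rp p by (simp add: Wm_def va_def vb_def vc_def)
        qed
      next
        case rp: False
        have ne: "j \<noteq> r" using rp jp by auto
        have "N - j = j \<Longrightarrow> j \<noteq> r - p \<and> j \<noteq> N - (r - p)" using rp jp p rN by linarith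
        moreover have "N - j \<noteq> j \<Longrightarrow> (N - j = r - p) = (j = N - (r - p))" using rp jp p rN by linarith
        moreover have "(N - j = N - (r - p)) = (j = r - p)" using rp jp p rN by linarith
        ultimately show ?thesis using ne rN jp rp p by (auto simp: Wm_def va_def vb_def vc_def)
      qed
    next
      case jp: False
      show ?thesis
      proof (cases "r < p")
        case rp: True
        have ne: "j \<noteq> r" using rp jp by auto
        have "(j - p = N - r) = (N - (j - p) = r)" "(N - (j - p) = N - r) = (j - p = r)"
          using rp jp p rN by linarith+
        then show ?thesis using ne rN jp rp p by (auto simp: Wm_def va_def vb_def vc_def)
      next
        case rp: False
        have "j - p \<noteq> N - (r - p)" "N - (j - p) \<noteq> r - p" "(N - (j - p) = N - (r - p)) = (j = r)"
           "(j - p = r - p) = (j = r)"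
          using rp jp p rN by linarith+
        then show ?thesis using rN jp rp p by (auto simp: Wm_def va_def vb_def vc_def)
      qed
    qed
  qed
  finally show "(Wm N * (Vm N :: 'a mat)) $$ (r,j) = 1\<^sub>m (N+1) $$ (r,j)" .
qed (auto simp: Wm_def Vm_def)




lemma Vrow:
  assumes "i < N+1" "l < N+1"
  shows "Vm N $$ (i,l) = (if l = min i (N-i) then 1 else 0) +
     (if l = N div 2 + 1 + min i (N-i) then (if i < N - i then 1 else if N - i < i then -1 else 0) else (0::'a::comm_ring_1))"
proof -
  define p where "p = N div 2 + 1"
  have p: "N < 2*p" "2*p \<le> N+2" "N div 2 + 1 = p" unfolding p_def by auto
  show ?thesis
  proof (cases "l < p")
    case True
    have "l \<noteq> p + min i (N-i)" using True by auto
    moreover have "(i = l \<or> (i = N - l \<and> N - l \<noteq> l)) = (l = min i (N-i))" using True assms p by linarith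
    moreover have "\<not> (i = l \<and> i = N - l \<and> N - l \<noteq> l)" by auto
    ultimately show ?thesis using True assms p by (auto simp: Vm_def va_def vb_def vc_def)
  next
    case False
    have "l \<noteq> min i (N-i)" using False assms p by linarith
    moreover have "(i = l - p) = (l = p + min i (N-i) \<and> i < N - i)" using False assms p by linarith
    moreover have "(i = N - (l - p)) = (l = p + min i (N-i) \<and> N - i < i)" using False assms p by linarith
    ultimately show ?thesis using False assms p by (auto simp: Vm_def va_def vb_def vc_def)
  qed
qed

definition Mw :: "(int \<Rightarrow> 'a::comm_ring_1) \<Rightarrow> nat \<Rightarrow> 'a mat" where
  "Mw w N = 1\<^sub>m (N+1) - A_mat w N"
definition Mp :: "(int \<Rightarrow> 'a::comm_ring_1) \<Rightarrow> nat \<Rightarrow> 'a mat" where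
  "Mp w N = 1\<^sub>m (N div 2 + 1) - Aplus_mat w N"
definition Mm :: "(int \<Rightarrow> 'a::comm_ring_1) \<Rightarrow> nat \<Rightarrow> 'a mat" where
  "Mm w N = 1\<^sub>m ((N+1) div 2) - Aminus_mat w N"
definition Bm :: "(int \<Rightarrow> 'a::comm_ring_1) \<Rightarrow> nat \<Rightarrow> 'a mat" where
  "Bm w N = four_block_mat (Mp w N) (0\<^sub>m (N div 2 + 1) ((N+1) div 2)) (0\<^sub>m ((N+1) div 2) (N div 2 + 1)) (Mm w N)"

lemma Mw_carrier[simp]: "Mw w N \<in> carrier_mat (N+1) (N+1)"
  by (auto simp: Mw_def A_mat_def)
lemma Mp_carrier[simp]: "Mp w N \<in> carrier_mat (N div 2 + 1) (N div 2 + 1)"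
  by (auto simp: Mp_def Aplus_mat_def)
lemma Mm_carrier[simp]: "Mm w N \<in> carrier_mat ((N+1) div 2) ((N+1) div 2)"
  by (auto simp: Mm_def Aminus_mat_def)
lemma Bm_carrier[simp]: "Bm w N \<in> carrier_mat (N+1) (N+1)"
proof -
  have "N div 2 + 1 + (N+1) div 2 = N+1" by auto
  then show ?thesis unfolding Bm_def using four_block_carrier_mat[OF Mp_carrier Mm_carrier] by metis
qed
lemma Bm_dims[simp]: "dim_row (Bm w N) = N+1" "dim_col (Bm w N) = N+1"
  using Bm_carrier[of w N] unfolding carrier_mat_def by blast+
lemma Vm_dims[simp]: "dim_row (Vm N) = N+1" "dim_col (Vm N) = N+1" by (auto simp: Vm_def)
lemma Mw_dims[simp]: "dim_row (Mw w N) = N+1" "dim_col (Mw w N) = N+1" by (auto simp: Mw_def A_mat_def)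
lemma Vm_carrier[simp]: "Vm N \<in> carrier_mat (N+1) (N+1)"
  by (auto simp: Vm_def)

lemma Mw_idx: "i < N+1 \<Longrightarrow> l < N+1 \<Longrightarrow> Mw w N $$ (i,l) = (if i = l then 1 else 0) - w (int l - int i)"
  by (simp add: Mw_def A_mat_def)
lemma Mp_idx: "i < N div 2 + 1 \<Longrightarrow> l < N div 2 + 1 \<Longrightarrow> Mp w N $$ (i,l) = (if i = l then 1 else 0) -
   (if 2 * l < N then w (int l - int i) + w (int N - int l - int i) else w (int l - int i))"
  by (simp add: Mp_def Aplus_mat_def)
lemma Mm_idx: "i < (N+1) div 2 \<Longrightarrow> l < (N+1) div 2 \<Longrightarrow> Mm w N $$ (i,l) = (if i = l then 1 else 0) -
   (w (int l - int i) - w (int N - int l - int i))"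
  by (simp add: Mm_def Aminus_mat_def)

lemma Bm_idx: "r < N+1 \<Longrightarrow> j < N+1 \<Longrightarrow> Bm w N $$ (r,j) =
   (if r < N div 2 + 1 then (if j < N div 2 + 1 then Mp w N $$ (r,j) else 0)
    else (if j < N div 2 + 1 then 0 else Mm w N $$ (r - (N div 2 + 1), j - (N div 2 + 1))))"
proof -
  assume a: "r < N+1" "j < N+1"
  have "N div 2 + 1 + (N+1) div 2 = N+1" by auto
  then show ?thesis using a Mp_carrier[of w N] Mm_carrier[of w N] unfolding Bm_def
    by (subst index_mat_four_block) auto
qed




lemma va_lt: "j < N+1 \<Longrightarrow> va N j < N+1" unfolding va_def by (cases "j < N div 2 + 1") auto
lemma vb_lt: "j < N+1 \<Longrightarrow> vb N j < N+1" unfolding vb_def by (cases "j < N div 2 + 1") auto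
lemma Vcol: "l < N+1 \<Longrightarrow> j < N+1 \<Longrightarrow> Vm N $$ (l,j) = (if l = va N j then 1 else 0) + (if l = vb N j then vc N j else 0)"
  by (simp add: Vm_def)

lemma MV:
  fixes w :: "int \<Rightarrow> 'a::comm_ring_1"
  assumes ws: "\<And>s. w (-s) = w s"
  shows "Mw w N * Vm N = Vm N * Bm w N"
proof (rule eq_matI)
  fix i j assume "i < dim_row (Vm N * Bm w N)" "j < dim_col (Vm N * Bm w N)"
  then have ij: "i < N+1" "j < N+1" by simp_all
  define p where "p = N div 2 + 1"
  have p: "N < 2*p" "2*p \<le> N+2" "N div 2 + 1 = p" "(N+1) div 2 = N+1-p" unfolding p_def by auto
  define i' where "i' = min i (N-i)"
  define si :: 'a where "si = (if i < N - i then 1 else if N - i < i then -1 else 0)"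
  have L: "(Mw w N * Vm N) $$ (i,j) = Mw w N $$ (i, va N j) + vc N j * Mw w N $$ (i, vb N j)"
    by (rule mult_col2[where n="N+1"]) (use ij va_lt[OF ij(2)] vb_lt[OF ij(2)] in \<open>simp_all add: Vcol\<close>)
  have R: "(Vm N * Bm w N) $$ (i,j) = Bm w N $$ (i', j) + si * Bm w N $$ (p + i', j)"
  proof -
    have a: "min i (N-i) < N+1" using ij by linarith
    have bc: "N div 2 + 1 + min i (N-i) < N+1 \<or> (if i < N - i then 1 else if N - i < i then -1 else 0) = (0::'a)"
    proof (cases "i = N - i")
      case False
      then have "N div 2 + 1 + min i (N-i) < N+1" using ij by linarith
      then show ?thesis by blast
    qed simp
    show ?thesis unfolding i'_def si_def p_def
      by (rule mult_row2[where n="N+1"]) (use ij a bc in \<open>simp_all add: Vrow\<close>)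
  qed
  have i'p: "i' < p" "i' < N+1" using ij p unfolding i'_def by linarith+
  have T2: "si * Bm w N $$ (p + i', j) = (if j < p then 0 else si * Mm w N $$ (i', j-p))"
  proof (cases "si = 0")
    case False
    then have "i \<noteq> N - i" unfolding si_def by auto
    then have "p + i' < N+1" using ij p unfolding i'_def by linarith
    then show ?thesis using ij p by (simp add: Bm_idx)
  qed simp
  have T1: "Bm w N $$ (i', j) = (if j < p then Mp w N $$ (i',j) else 0)"
    using ij p i'p by (simp add: Bm_idx)
  have wsym: "\<And>x y. x = - y \<Longrightarrow> w x = w y" using ws by auto
  have iN: "int (N - i) = int N - int i" "int (N - j) = int N - int j" using ij by auto
  show "(Mw w N * Vm N) $$ (i,j) = (Vm N * Bm w N) $$ (i,j)"
    unfolding L R T1 T2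
  proof (cases "j < p")
    case jp: True
    have va: "va N j = j" "vb N j = N - j" using jp p by (auto simp: va_def vb_def)
    have Mp_e: "Mp w N $$ (i',j) = (if i' = j then 1 else 0) -
       (if 2 * j < N then w (int j - int i') + w (int N - int j - int i') else w (int j - int i'))"
      using jp i'p p by (simp add: Mp_idx)
    show "Mw w N $$ (i, va N j) + vc N j * Mw w N $$ (i, vb N j) =
      (if j < p then Mp w N $$ (i', j) else 0) + (if j < p then 0 else si * Mm w N $$ (i', j - p))"
    proof (cases "N - i < i")
      case False
      then have i': "i' = i" unfolding i'_def by auto
      show ?thesis
      proof (cases "N - j = j")
        case True
        then show ?thesis using jp va ij p i' Mp_e by (simp add: vc_def Mw_idx)
      next
        case False
        have "i \<noteq> N - j" using False jp p ij \<open>\<not> N - i < i\<close> by linarith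
        moreover have "2 * j < N" using False jp p by linarith
        ultimately show ?thesis using False jp va ij p i' Mp_e by (simp add: vc_def Mw_idx of_nat_diff)
      qed
    next
      case True
      then have i': "i' = N - i" unfolding i'_def by auto
      have ne: "i \<noteq> j" using True jp p by linarith
      show ?thesis
      proof (cases "N - j = j")
        case c: True
        have "N - i \<noteq> j" using c ne ij by linarith
        moreover have "\<not> 2 * j < N" using c by linarith
        moreover have "w (int j - int i) = w (int j - int (N - i))"
          using c True ij by (intro wsym) (use iN c in linarith)
        ultimately show ?thesis using c jp va ij p i' Mp_e ne by (simp add: vc_def Mw_idx)
      next
        case c: False
        have "(i = N - j) = (N - i = j)" using ij jp by linarith
        moreover have "2 * j < N" using c jp p by linarith
        moreover have "w (int j - int i) = w (int N - int j - int (N - i))"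
          by (intro wsym) (use iN in linarith)
        moreover have "w (int (N - j) - int i) = w (int j - int (N - i))"
          by (intro wsym) (use iN in linarith)
        ultimately show ?thesis using c jp va ij p i' Mp_e ne
          by (simp add: vc_def Mw_idx of_nat_diff)
      qed
    qed
  next
    case jp: False
    define q where "q = j - p"
    have va: "va N j = q" "vb N j = N - q" "vc N j = -1" using jp p by (auto simp: va_def vb_def vc_def q_def)
    have q: "q < N + 1 - p" using ij jp p unfolding q_def by linarith
    have qN: "int (N - q) = int N - int q" using q by auto
    show "Mw w N $$ (i, va N j) + vc N j * Mw w N $$ (i, vb N j) =
      (if j < p then Mp w N $$ (i', j) else 0) + (if j < p then 0 else si * Mm w N $$ (i', j - p))"
    proof (cases "i < N - i")
      case True
      then have i': "i' = i" "si = 1" unfolding i'_def si_def by auto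
      have "i < N + 1 - p" using True p by linarith
      moreover have "i \<noteq> N - q" using True q p by linarith
      ultimately show ?thesis using jp ij p i' q by (simp add: va Mw_idx Mm_idx qN flip: q_def)
    next
      case False
      show ?thesis
      proof (cases "N - i < i")
        case True
        then have i': "i' = N - i" "si = -1" unfolding i'_def si_def by auto
        have "N - i < N + 1 - p" using True p ij by linarith
        moreover have "i \<noteq> q" using True q p by linarith
        moreover have "(i = N - q) = (N - i = q)" using ij q p by linarith
        moreover have "w (int q - int i) = w (int N - int q - int (N - i))"
          by (intro wsym) (use iN in linarith)
        moreover have "w (int (N - q) - int i) = w (int q - int (N - i))"
          by (intro wsym) (use iN qN in linarith)
        ultimately show ?thesis using jp ij p i' q by (simp add: va Mw_idx Mm_idx flip: q_def)
      next
        case False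
        then have i': "si = 0" and nN: "N = 2 * i" using \<open>\<not> i < N - i\<close> unfolding si_def by auto
        have "i \<noteq> q" "i \<noteq> N - q" using nN q p by linarith+
        moreover have "w (int q - int i) = w (int (N - q) - int i)"
          by (intro wsym) (use iN qN nN in linarith)
        ultimately show ?thesis using jp ij p i' q by (simp add: va Mw_idx flip: q_def)
      qed
    qed
  qed
qed simp_all




lemma Wm_carrier[simp]: "Wm N \<in> carrier_mat (N+1) (N+1)" by (auto simp: Wm_def)

lemma detV: "det (Vm N :: 'a::field_char_0 mat) \<noteq> 0"
proof
  assume "det (Vm N :: 'a mat) = 0"
  then have "det (Wm N * (Vm N :: 'a mat)) = 0" by (simp add: det_mult[OF Wm_carrier Vm_carrier])
  then show False by (simp add: WV)
qed

lemma detB: "det (Bm w N) = det (Mp w N) * det (Mm (w :: int \<Rightarrow> 'a::field) N)"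
  unfolding Bm_def by (rule det_four_block_mat_upper_right_zero[OF Mp_carrier refl _ Mm_carrier]) simp

lemma detM:
  fixes w :: "int \<Rightarrow> 'a::field_char_0"
  assumes ws: "\<And>s. w (-s) = w s"
  shows "det (Mw w N) = det (Mp w N) * det (Mm w N)"
proof -
  have "det (Mw w N) * det (Vm N) = det (Mw w N * Vm N)" by (simp add: det_mult[OF Mw_carrier Vm_carrier])
  also have "\<dots> = det (Vm N * Bm w N)" using MV[of w N, OF ws] by simp
  also have "\<dots> = det (Vm N) * det (Bm w N)" by (simp add: det_mult[OF Vm_carrier Bm_carrier])
  finally have e: "det (Mw w N) * det (Vm N) = det (Vm N) * det (Bm w N)" .
  have nz: "det (Vm N :: 'a mat) \<noteq> 0" by (rule detV)
  from e nz have "det (Mw w N) = det (Bm w N)" by (simp add: mult.commute)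
  then show ?thesis by (simp add: detB)
qed

lemma smult_smult_mat': "c \<cdot>\<^sub>m (d \<cdot>\<^sub>m A) = (c * d) \<cdot>\<^sub>m (A :: 'a::comm_ring_1 mat)"
  by (rule eq_matI) auto

lemma smult_one_mat': "1 \<cdot>\<^sub>m (A :: 'a::comm_ring_1 mat) = A"
  by (rule eq_matI) auto

lemma inv_via_adj:
  fixes M :: "'a::field mat"
  assumes M: "M \<in> carrier_mat n n" and d: "det M \<noteq> 0"
  shows "M * ((1 / det M) \<cdot>\<^sub>m adj_mat M) = 1\<^sub>m n" "((1 / det M) \<cdot>\<^sub>m adj_mat M) * M = 1\<^sub>m n"
    "(1 / det M) \<cdot>\<^sub>m adj_mat M \<in> carrier_mat n n"
proof -
  note a = adj_mat[OF M]
  show "M * ((1 / det M) \<cdot>\<^sub>m adj_mat M) = 1\<^sub>m n"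
    using a d M by (simp add: mult_smult_distrib smult_smult_mat' smult_one_mat')
  show "((1 / det M) \<cdot>\<^sub>m adj_mat M) * M = 1\<^sub>m n"
    using a d M by (simp add: mult_smult_assoc_mat smult_smult_mat' smult_one_mat')
  show "(1 / det M) \<cdot>\<^sub>m adj_mat M \<in> carrier_mat n n" using a by simp
qed

lemma inv_mat_eq:
  fixes M :: "'a::field mat"
  assumes M: "M \<in> carrier_mat n n" and d: "det M \<noteq> 0"
  shows "inv_mat M = (1 / det M) \<cdot>\<^sub>m adj_mat M"
proof -
  let ?I = "(1 / det M) \<cdot>\<^sub>m adj_mat M"
  note I = inv_via_adj[OF M d]
  have dr: "dim_row M = n" using M by auto
  show ?thesis unfolding inv_mat_def dr
  proof (rule the_equality)
    show "?I \<in> carrier_mat n n \<and> M * ?I = 1\<^sub>m n \<and> ?I * M = 1\<^sub>m n" using I by auto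
  next
    fix B assume B: "B \<in> carrier_mat n n \<and> M * B = 1\<^sub>m n \<and> B * M = 1\<^sub>m n"
    have "dim_row B = n" using B by auto
    then have "B = (?I * M) * B" using B I by simp
    also have "\<dots> = ?I * (M * B)" by (rule assoc_mult_mat[of _ n n _ n _ n]) (use B I M in auto)
    also have "\<dots> = ?I" using B I right_mult_one_mat[of ?I n n] by simp
    finally show "B = ?I" .
  qed
qed




lemma Einv:
  fixes w :: "int \<Rightarrow> 'a::field_char_0"
  assumes ws: "\<And>s. w (-s) = w s" and k1: "1 \<le> k" and d: "det (Mw w k) \<noteq> 0"
  shows "\<forall>l. 2*l < k \<longrightarrow>
      inv_mat (Mw w k) $$ (0,l) + inv_mat (Mw w k) $$ (0,k-l) = cofactor (Mp w k) l 0 / det (Mp w k) \<and>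
      inv_mat (Mw w k) $$ (0,l) - inv_mat (Mw w k) $$ (0,k-l) = cofactor (Mm w k) l 0 / det (Mm w k)"
    "even k \<longrightarrow> inv_mat (Mw w k) $$ (0,k div 2) = cofactor (Mp w k) (k div 2) 0 / det (Mp w k)"
proof -
  have dd: "det (Mw w k) = det (Mp w k) * det (Mm w k)" by (rule detM[of w, OF ws])
  have dp: "det (Mp w k) \<noteq> 0" and dm: "det (Mm w k) \<noteq> 0" using d dd by auto
  define p where "p = k div 2 + 1"
  define m where "m = (k+1) div 2"
  have pm: "p + m = k+1" "1 \<le> m" "p < k+1" "1 \<le> p" using k1 unfolding p_def m_def by auto
  define Pinv where "Pinv = (1 / det (Mp w k)) \<cdot>\<^sub>m adj_mat (Mp w k)"
  define Qinv where "Qinv = (1 / det (Mm w k)) \<cdot>\<^sub>m adj_mat (Mm w k)"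
  define Binv where "Binv = four_block_mat Pinv (0\<^sub>m p m) (0\<^sub>m m p) Qinv"
  define Minv where "Minv = inv_mat (Mw w k)"
  have Mp_c: "Mp w k \<in> carrier_mat p p" unfolding p_def by (rule Mp_carrier)
  have Mm_c: "Mm w k \<in> carrier_mat m m" unfolding m_def by (rule Mm_carrier)
  note P = inv_via_adj[OF Mp_c dp, folded Pinv_def]
  note Q = inv_via_adj[OF Mm_c dm, folded Qinv_def]
  have Minv_eq: "Minv = (1 / det (Mw w k)) \<cdot>\<^sub>m adj_mat (Mw w k)"
    unfolding Minv_def by (rule inv_mat_eq[OF Mw_carrier d])
  note MI = inv_via_adj[OF Mw_carrier d, folded Minv_eq]
  have Binv_c: "Binv \<in> carrier_mat (k+1) (k+1)"
    unfolding Binv_def using four_block_carrier_mat[OF P(3) Q(3)] pm by metis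
  have BB: "Bm w k * Binv = 1\<^sub>m (k+1)"
  proof -
    have "Bm w k * Binv = four_block_mat (Mp w k * Pinv + 0\<^sub>m p m * 0\<^sub>m m p) (Mp w k * 0\<^sub>m p m + 0\<^sub>m p m * Qinv)
       (0\<^sub>m m p * Pinv + Mm w k * 0\<^sub>m m p) (0\<^sub>m m p * 0\<^sub>m p m + Mm w k * Qinv)"
      unfolding Bm_def Binv_def p_def[symmetric] m_def[symmetric]
      by (rule mult_four_block_mat[OF Mp_c _ _ Mm_c P(3) _ _ Q(3)]) auto
    also have "\<dots> = four_block_mat (1\<^sub>m p) (0\<^sub>m p m) (0\<^sub>m m p) (1\<^sub>m m)"
      using P Q Mp_c Mm_c by simp
    also have "\<dots> = 1\<^sub>m (k+1)" using pm by simp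
    finally show ?thesis .
  qed
  have key: "Minv * Vm k = Vm k * Binv"
  proof -
    note c = MI(3) Binv_c Vm_carrier[of k] Bm_carrier[of w k] Mw_carrier[of w k]
    have "Minv * Vm k = Minv * Vm k * (Bm w k * Binv)" using MI c by (simp add: BB)
    also have "\<dots> = Minv * (Vm k * (Bm w k * Binv))" by (rule assoc_mult_mat) (use c in auto)
    also have "Vm k * (Bm w k * Binv) = (Vm k * Bm w k) * Binv" by (rule assoc_mult_mat[symmetric]) (use c in auto)
    also have "Vm k * Bm w k = Mw w k * Vm k" using MV[of w k, OF ws] by simp
    also have "(Mw w k * Vm k) * Binv = Mw w k * (Vm k * Binv)" by (rule assoc_mult_mat) (use c in auto)
    also have "Minv * (Mw w k * (Vm k * Binv)) = (Minv * Mw w k) * (Vm k * Binv)" by (rule assoc_mult_mat[symmetric]) (use c in auto)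
    also have "\<dots> = Vm k * Binv" using MI(2) c by simp
    finally show ?thesis .
  qed
  have ent: "Minv $$ (0, va k j) + vc k j * Minv $$ (0, vb k j) = Binv $$ (0,j) + Binv $$ (p,j)"
    if j: "j < k+1" for j
  proof -
    have "Minv $$ (0, va k j) + vc k j * Minv $$ (0, vb k j) = (Minv * Vm k) $$ (0,j)"
      by (rule mult_col2[where n="k+1", symmetric]) (use j MI(3) va_lt[OF j] vb_lt[OF j] in \<open>simp_all add: Vcol\<close>)
    also have "\<dots> = (Vm k * Binv) $$ (0,j)" by (simp add: key)
    also have "\<dots> = Binv $$ (0,j) + 1 * Binv $$ (p,j)"
    proof (rule mult_row2[where n="k+1"])
      fix l assume l: "l < k+1"
      show "Vm k $$ (0,l) = (if l = 0 then 1 else 0) + (if l = p then 1 else (0::'a))"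
      proof -
        have e: "Vm k $$ (0,l) = (if l = min 0 (k-0) then 1 else 0) +
          (if l = k div 2 + 1 + min 0 (k-0) then (if 0 < k - 0 then 1 else if k - 0 < 0 then -1 else 0) else (0::'a))"
          by (rule Vrow) (use l in auto)
        have r: "((if l = min 0 (k-0) then 1 else 0) +
          (if l = k div 2 + 1 + min 0 (k-0) then (if 0 < k - 0 then 1 else if k - 0 < 0 then -1 else 0) else (0::'a)))
          = (if l = 0 then 1 else 0) + (if l = p then 1 else 0)"
          using k1 by (simp add: p_def)
        show ?thesis unfolding e r ..
      qed
    qed (use j Binv_c pm in auto)
    finally show ?thesis by simp
  qed
  have dims: "dim_row Pinv = p" "dim_col Pinv = p" "dim_row Qinv = m" "dim_col Qinv = m"
    using P(3) Q(3) by auto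
  have Binv0: "Binv $$ (0,j) = (if j < p then Pinv $$ (0,j) else 0)" if "j < k+1" for j
    unfolding Binv_def using that pm by (simp add: dims)
  have Binvp: "Binv $$ (p,j) = (if j < p then 0 else Qinv $$ (0,j-p))" if "j < k+1" for j
    unfolding Binv_def using that pm by (simp add: dims)
  have Pe: "Pinv $$ (0,j) = cofactor (Mp w k) j 0 / det (Mp w k)" if "j < p" for j
    unfolding Pinv_def adj_mat_def using that Mp_c pm by auto
  have Qe: "Qinv $$ (0,j) = cofactor (Mm w k) j 0 / det (Mm w k)" if "j < m" for j
    unfolding Qinv_def adj_mat_def using that Mm_c pm by auto
  show "\<forall>l. 2*l < k \<longrightarrow>
      inv_mat (Mw w k) $$ (0,l) + inv_mat (Mw w k) $$ (0,k-l) = cofactor (Mp w k) l 0 / det (Mp w k) \<and>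
      inv_mat (Mw w k) $$ (0,l) - inv_mat (Mw w k) $$ (0,k-l) = cofactor (Mm w k) l 0 / det (Mm w k)"
  proof (intro allI impI conjI)
    fix l assume l: "2 * l < k"
    have lp: "l < p" "l < m" "l < k+1" "p + l < k+1" using l unfolding p_def m_def by auto
    have v1: "va k l = l" "vb k l = k - l" "vc k l = (1::'a)"
      using l unfolding va_def vb_def vc_def by auto
    have v2: "va k (p+l) = l" "vb k (p+l) = k - l" "vc k (p+l) = (-1::'a)"
      using l unfolding va_def vb_def vc_def p_def by auto
    show "inv_mat (Mw w k) $$ (0,l) + inv_mat (Mw w k) $$ (0,k-l) = cofactor (Mp w k) l 0 / det (Mp w k)"
      using ent[OF lp(3)] Binv0[OF lp(3)] Binvp[OF lp(3)] Pe[OF lp(1)] lp v1 unfolding Minv_def by simp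
    show "inv_mat (Mw w k) $$ (0,l) - inv_mat (Mw w k) $$ (0,k-l) = cofactor (Mm w k) l 0 / det (Mm w k)"
      using ent[OF lp(4)] Binv0[OF lp(4)] Binvp[OF lp(4)] Qe[OF lp(2)] lp v2 unfolding Minv_def by simp
  qed
  show "even k \<longrightarrow> inv_mat (Mw w k) $$ (0,k div 2) = cofactor (Mp w k) (k div 2) 0 / det (Mp w k)"
  proof
    assume ev: "even k"
    have lp: "k div 2 < p" "k div 2 < k+1" unfolding p_def by auto
    have v1: "va k (k div 2) = k div 2" "vb k (k div 2) = k div 2" "vc k (k div 2) = (0::'a)"
      using ev unfolding va_def vb_def vc_def by auto
    show "inv_mat (Mw w k) $$ (0,k div 2) = cofactor (Mp w k) (k div 2) 0 / det (Mp w k)"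
      using ent[OF lp(2)] Binv0[OF lp(2)] Binvp[OF lp(2)] Pe[OF lp(1)] lp v1 unfolding Minv_def by simp
  qed
qed




lemma F_Mw: "F w (Suc N) = det (Mw w N)" by (simp add: F_def Mw_def)
lemma Fplus_Mp: "Fplus w (Suc N) = det (Mp w N)" by (simp add: Fplus_def Mp_def Aplus_mat_def)
lemma Fminus_Mm: "Fminus w (Suc N) = det (Mm w N)" by (simp add: Fminus_def Mm_def Aminus_mat_def)
lemma E_Mw: "E w k l = inv_mat (Mw w k) $$ (0,l)" by (simp add: E_def Mw_def)
lemma Fplus_cof_Mp: "Fplus_cof w k l = cofactor (Mp w k) l 0" by (simp add: Fplus_cof_def Mp_def Aplus_mat_def)
lemma Fminus_cof_Mm: "Fminus_cof w k l = cofactor (Mm w k) l 0" by (simp add: Fminus_cof_def Mm_def Aminus_mat_def)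

theorem mainTheorem11:
  fixes S :: "int set" and w :: "int \<Rightarrow> 'a::field_char_0"
  assumes finS: "finite S" and neS: "S \<noteq> {}" and maxS: "Max S \<ge> 1"
    and supp: "\<And>s. s \<notin> S \<Longrightarrow> w s = 0"
    and symS: "uminus ` S = S"
    and symw: "\<And>s. s \<in> S \<Longrightarrow> w (- s) = w s"
  shows "(\<forall>k. F w k = Fplus w k * Fminus w k) \<and>
         (\<forall>k \<ge> 1. F w (k + 1) \<noteq> 0 \<longrightarrow>
            (\<forall>l. 2 * l < k \<longrightarrow>
               E w k l + E w k (k - l) = Fplus_cof w k l / Fplus w (k + 1) \<and>
               E w k l - E w k (k - l) = Fminus_cof w k l / Fminus w (k + 1)) \<and>
            (even k \<longrightarrow> E w k (k div 2) = Fplus_cof w k (k div 2) / Fplus w (k + 1)))"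
proof -
  have ws: "w (- s) = w s" for s
  proof (cases "s \<in> S")
    case True then show ?thesis by (rule symw)
  next
    case False
    have "- s \<notin> S"
    proof
      assume "- s \<in> S"
      then have "- (- s) \<in> uminus ` S" by blast
      then show False using False symS by simp
    qed
    then show ?thesis using False supp by simp
  qed
  have P1: "\<forall>k. F w k = Fplus w k * Fminus w k"
  proof
    fix k show "F w k = Fplus w k * Fminus w k"
    proof (cases k)
      case 0 then show ?thesis by (simp add: F_def Fplus_def Fminus_def)
    next
      case (Suc N)
      then show ?thesis using detM[of w N, OF ws] by (simp add: F_Mw Fplus_Mp Fminus_Mm)
    qed
  qed
  have P2: "\<forall>k \<ge> 1. F w (k + 1) \<noteq> 0 \<longrightarrow>
            (\<forall>l. 2 * l < k \<longrightarrow>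
               E w k l + E w k (k - l) = Fplus_cof w k l / Fplus w (k + 1) \<and>
               E w k l - E w k (k - l) = Fminus_cof w k l / Fminus w (k + 1)) \<and>
            (even k \<longrightarrow> E w k (k div 2) = Fplus_cof w k (k div 2) / Fplus w (k + 1))"
  proof (intro allI impI)
    fix k :: nat assume k1: "1 \<le> k" and d: "F w (k + 1) \<noteq> 0"
    have d': "det (Mw w k) \<noteq> 0" using d by (simp add: F_Mw)
    note r = Einv[of w k, OF ws k1 d']
    show "(\<forall>l. 2 * l < k \<longrightarrow>
               E w k l + E w k (k - l) = Fplus_cof w k l / Fplus w (k + 1) \<and>
               E w k l - E w k (k - l) = Fminus_cof w k l / Fminus w (k + 1)) \<and>
            (even k \<longrightarrow> E w k (k div 2) = Fplus_cof w k (k div 2) / Fplus w (k + 1))"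
      using r by (simp add: E_Mw Fplus_cof_Mp Fminus_cof_Mm Fplus_Mp Fminus_Mm)
  qed
  show ?thesis using P1 P2 by blast
qed


end
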